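(* Let $\mathbb{X},\mathbb{Y}$ be finite-dimensional Banach spaces with $\dim\mathbb{X}=n$, $\dim\mathbb{Y}=m$. Let $T\in\mathbb{L}(\mathbb{X},\mathbb{Y})$, $\|T\|=1$, be an operator of rank $1$ such that $T(M_T)=\{\lambda y:|\lambda|=1\}$ for some unit vector $y\in\mathbb{Y}$. If $\dim\operatorname{span}(M_T)=n$ and $y$ is $m$-smooth, then $T$ is an extreme contraction.
   Context: $M_T=\{x\in\mathbb{X}:\|x\|=1,\|Tx\|=\|T\|\}$. For a unit vector $z$ of a normed space $\mathbb{Z}$, $J(z)=\{f\in\mathbb{Z}^*:\|f\|=1,f(z)=1\}$, and $z$ is $k$-smooth if $\dim\operatorname{span}J(z)=k$. An operator $T$ is an extreme contraction if it is an extreme point of the closed unit ball of $\mathbb{L}(\mathbb{X},\mathbb{Y})$ (operator norm). *)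

theory Defs
  imports "HOL-Analysis.Analysis"
begin

definition norm_attain_set :: "('a::real_normed_vector \<Rightarrow>\<^sub>L 'b::real_normed_vector) \<Rightarrow> 'a set"
  where "norm_attain_set T = {x. norm x = 1 \<and> norm (blinfun_apply T x) = norm T}"

definition supp_funcs :: "'a::real_normed_vector \<Rightarrow> ('a \<Rightarrow>\<^sub>L real) set"
  where "supp_funcs z = {f. norm f = 1 \<and> blinfun_apply f z = 1}"

definition k_smooth :: "nat \<Rightarrow> 'a::real_normed_vector \<Rightarrow> bool"
  where "k_smooth k z \<longleftrightarrow> norm z = 1 \<and> dim (span (supp_funcs z)) = k"

definition fin_dim :: "'a::real_vector itself \<Rightarrow> bool"
  where "fin_dim _ \<longleftrightarrow> (\<exists>B::'a set. finite B \<and> span B = UNIV)"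

end

theory Submission imports Defs begin
lemma annih_zero:
  fixes S :: "('b::real_normed_vector \<Rightarrow>\<^sub>L real) set" and v :: 'b and F :: "'b set"
  assumes F: "finite F" "span F = UNIV"
    and dimY: "dim (UNIV :: 'b set) = m" and dimS: "dim S = m"
    and ann: "\<And>g. g \<in> S \<Longrightarrow> blinfun_apply g v = 0"
  shows "v = 0"
proof (rule ccontr)
  assume v: "v \<noteq> 0"
  then have iv: "independent {v}" by simp
  obtain B where B: "{v} \<subseteq> B" "independent B" "UNIV \<subseteq> span B"
    by (rule maximal_independent_subset_extend[OF subset_UNIV iv]) auto
  have fB: "finite B" using independent_span_bound[OF F(1) B(2)] F(2) by auto
  have cB: "card B = m" using dim_unique[of B UNIV "card B"] B dimY by simp
  define B' where "B' = B - {v}"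
  have fB': "finite B'" using fB B'_def by auto
  have cB': "card B' = m - 1" using cB B(1) fB unfolding B'_def by (simp add: card_Diff_singleton)
  have iB': "independent B'" using B(2) independent_mono B'_def by blast
  obtain C where C: "C \<subseteq> S" "independent C" "S \<subseteq> span C" "card C = dim S"
    by (rule basis_exists)
  define \<phi> where "\<phi> g = (\<Sum>b\<in>B'. blinfun_apply g b *\<^sub>R b)" for g :: "'b \<Rightarrow>\<^sub>L real"
  have lin: "linear \<phi>"
    unfolding \<phi>_def
    by (rule linearI) (simp_all add: scaleR_add_left sum.distrib scaleR_sum_right blinfun.add_left blinfun.scaleR_left)
  have spC: "\<And>w. w \<in> span C \<Longrightarrow> blinfun_apply w v = 0"
  proof -
    fix w assume "w \<in> span C"
    then show "blinfun_apply w v = 0"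
    proof (rule span_induct)
      show "subspace {w. blinfun_apply w v = 0}"
        by (auto simp: subspace_def blinfun.add_left blinfun.scaleR_left)
      show "\<And>x. x \<in> C \<Longrightarrow> blinfun_apply x v = 0" using C(1) ann by auto
    qed
  qed
  have inj: "inj_on \<phi> (span C)"
  proof (subst linear_inj_on_iff_eq_0[OF lin subspace_span], intro ballI impI)
    fix w assume w: "w \<in> span C" "\<phi> w = 0"
    have z1: "blinfun_apply w b = 0" if "b \<in> B'" for b
      using independentD[OF iB' fB' subset_refl, of "\<lambda>b. blinfun_apply w b"] w(2) that
      unfolding \<phi>_def by simp
    have z2: "blinfun_apply w b = 0" if "b \<in> B" for b
      using z1 spC[OF w(1)] that unfolding B'_def by (cases "b = v") auto
    have "blinfun_apply w x = 0" for x
    proof -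
      have "x \<in> span B" using B(3) by auto
      then show ?thesis
        by (rule span_induct) (auto simp: subspace_def blinfun.add_right blinfun.scaleR_right z2)
    qed
    then show "w = 0" by (intro blinfun_eqI) simp
  qed
  have i\<phi>: "independent (\<phi> ` C)"
    using linear_independent_injective_image[OF lin C(2) inj] .
  have "\<phi> ` C \<subseteq> span B'"
    unfolding \<phi>_def by (auto simp: span_sum span_mul span_base)
  then have "card (\<phi> ` C) \<le> m - 1" using independent_span_bound[OF fB' i\<phi>] cB' by auto
  moreover have "card (\<phi> ` C) = card C"
    by (rule card_image, rule inj_on_subset[OF inj span_superset])
  moreover have "m \<ge> 1" using cB B(1) fB using card_gt_0_iff[of B] by auto
  ultimately show False using C(4) dimS by linarith
qed

lemma conv_ext:
  fixes a b c u :: real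
  assumes "\<bar>a\<bar> \<le> 1" "\<bar>b\<bar> \<le> 1" "\<bar>c\<bar> = 1" "0 < u" "u < 1" "c = (1-u)*a + u*b"
  shows "a = c \<and> b = c"
proof (cases "c = 1")
  case True
  have h1: "(1-u)*(1-a) \<ge> 0" "u*(1-b) \<ge> 0" using assms by auto
  have "(1-u)*(1-a) + u*(1-b) = 0" using assms True by (simp add: algebra_simps)
  then have "(1-u)*(1-a) = 0" "u*(1-b) = 0" using h1 by linarith+
  then show ?thesis using assms True by auto
next
  case False
  then have c: "c = -1" using assms(3) by auto
  have h1: "(1-u)*(1+a) \<ge> 0" "u*(1+b) \<ge> 0" using assms by auto
  have "(1-u)*(1+a) + u*(1+b) = 0" using assms c by (simp add: algebra_simps)
  then have "(1-u)*(1+a) = 0" "u*(1+b) = 0" using h1 by linarith+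
  then show ?thesis using assms c by auto
qed

lemma span_full:
  fixes M F :: "'a::real_vector set"
  assumes F: "finite F" "span F = UNIV" and d: "dim (span M) = dim (UNIV :: 'a set)"
  shows "span M = UNIV"
proof -
  obtain D where D: "D \<subseteq> M" "independent D" "M \<subseteq> span D" "card D = dim M"
    by (rule basis_exists)
  obtain E where E: "D \<subseteq> E" "independent E" "UNIV \<subseteq> span E"
    by (rule maximal_independent_subset_extend[OF subset_UNIV D(2)]) auto
  have fE: "finite E" using independent_span_bound[OF F(1) E(2)] F(2) by auto
  have cE: "card E = dim (UNIV :: 'a set)" using dim_unique[of E UNIV "card E"] E by simp
  have "card D = card E" using D(4) cE d by simp
  then have "D = E" using card_subset_eq[OF fE E(1)] by simp
  then have "UNIV \<subseteq> span D" using E(3) by simp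
  moreover have "span D \<subseteq> span M" using D(1) span_mono by blast
  ultimately show ?thesis by blast
qed

theorem mainTheorem5:
  fixes T :: "'a::banach \<Rightarrow>\<^sub>L 'b::banach" and y :: 'b and n m :: nat
  assumes "fin_dim TYPE('a)" and "fin_dim TYPE('b)"
    and "dim (UNIV :: 'a set) = n" and "dim (UNIV :: 'b set) = m"
    and "norm T = 1"
    and "dim (range (blinfun_apply T)) = 1"
    and "norm y = 1"
    and "blinfun_apply T ` norm_attain_set T = {c *\<^sub>R y | c. \<bar>c\<bar> = 1}"
    and "dim (span (norm_attain_set T)) = n"
    and "k_smooth m y"
  shows "T extreme_point_of cball 0 1"
proof -
  obtain FA :: "'a set" where FA: "finite FA" "span FA = UNIV" using assms(1) unfolding fin_dim_def by blast
  obtain FB :: "'b set" where FB: "finite FB" "span FB = UNIV" using assms(2) unfolding fin_dim_def by blast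
  let ?M = "norm_attain_set T"
  let ?J = "supp_funcs y"
  have spM: "span ?M = UNIV" using span_full[OF FA] assms(3,9) by simp
  have dJ: "dim (span ?J) = m" using assms(10) unfolding k_smooth_def by simp
  have key: "blinfun_apply A x = blinfun_apply T x"
    if A: "A \<in> cball 0 1" and Bc: "B \<in> cball 0 1" and u: "0 < u" "u < 1"
      and TAB: "T = (1-u) *\<^sub>R A + u *\<^sub>R B" and x: "x \<in> ?M" for A B :: "'a \<Rightarrow>\<^sub>L 'b" and u x
  proof -
    have nx: "norm x = 1" using x unfolding norm_attain_set_def by simp
    obtain c where c: "blinfun_apply T x = c *\<^sub>R y" "\<bar>c\<bar> = 1"
      using assms(8) x by (smt (verit, best) image_eqI mem_Collect_eq)
    have nA: "norm A \<le> 1" "norm B \<le> 1" using A Bc by auto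
    have gz: "blinfun_apply g (blinfun_apply A x - blinfun_apply T x) = 0" if g: "g \<in> ?J" for g
    proof -
      have g1: "norm g = 1" "blinfun_apply g y = 1" using g unfolding supp_funcs_def by auto
      have bnd: "\<bar>blinfun_apply g (blinfun_apply C x)\<bar> \<le> 1" if "norm C \<le> 1" for C :: "'a \<Rightarrow>\<^sub>L 'b"
      proof -
        have "\<bar>blinfun_apply g (blinfun_apply C x)\<bar> \<le> norm g * norm (blinfun_apply C x)"
          using norm_blinfun[of g "blinfun_apply C x"] by simp
        also have "\<dots> \<le> 1 * (norm C * norm x)"
          using g1 norm_blinfun[of C x] by simp
        also have "\<dots> \<le> 1" using that nx by simp
        finally show ?thesis .
      qed
      have gT: "blinfun_apply g (blinfun_apply T x) = c" using c g1 by (simp add: blinfun.scaleR_right)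
      have "blinfun_apply T x = (1-u) *\<^sub>R blinfun_apply A x + u *\<^sub>R blinfun_apply B x"
        using TAB by (simp add: blinfun.add_left blinfun.scaleR_left)
      then have "c = (1-u) * blinfun_apply g (blinfun_apply A x) + u * blinfun_apply g (blinfun_apply B x)"
        using gT by (simp add: blinfun.add_right blinfun.scaleR_right)
      then have "blinfun_apply g (blinfun_apply A x) = c"
        using conv_ext[OF bnd[OF nA(1)] bnd[OF nA(2)] c(2) u] by blast
      then show ?thesis using gT by (simp add: blinfun.diff_right)
    qed
    have "blinfun_apply A x - blinfun_apply T x = 0"
    proof (rule annih_zero[OF FB assms(4) dJ])
      fix g assume "g \<in> span ?J"
      then show "blinfun_apply g (blinfun_apply A x - blinfun_apply T x) = 0"
        by (rule span_induct) (auto simp: subspace_def blinfun.add_left blinfun.scaleR_left gz)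
    qed
    then show ?thesis by simp
  qed
  have eqT: "A = T"
    if A: "A \<in> cball 0 1" and Bc: "B \<in> cball 0 1" and u: "0 < u" "u < 1"
      and TAB: "T = (1-u) *\<^sub>R A + u *\<^sub>R B" for A B :: "'a \<Rightarrow>\<^sub>L 'b" and u
  proof (rule blinfun_eqI)
    fix z :: 'a
    have "z \<in> span ?M" using spM by simp
    then show "blinfun_apply A z = blinfun_apply T z"
      by (rule span_induct)
        (auto simp: subspace_def blinfun.add_right blinfun.scaleR_right key[OF A Bc u TAB])
  qed
  show ?thesis
    unfolding extreme_point_of_def
  proof (intro conjI ballI notI)
    show "T \<in> cball 0 1" using assms(5) by simp
  next
    fix A B assume A: "A \<in> cball (0 :: 'a \<Rightarrow>\<^sub>L 'b) 1" and Bc: "B \<in> cball (0 :: 'a \<Rightarrow>\<^sub>L 'b) 1"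
      and s: "T \<in> open_segment A B"
    then obtain u where u: "0 < u" "u < 1" and TAB: "T = (1-u) *\<^sub>R A + u *\<^sub>R B" and AB: "A \<noteq> B"
      by (auto simp: in_segment)
    have "A = T" using eqT[OF A Bc u TAB] .
    moreover have "B = T"
      using eqT[OF Bc A, of "1-u"] u TAB by (simp add: add.commute)
    ultimately show False using AB by simp
  qed
qed

end
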